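(* Given integers $d\ge3$ and $2\le j\le d-1$, there exists an empty simplex $\mathcal{P}$ of dimension $d$ with $\mu_{\mathrm{va}}(\mathcal{P})=\mu_{\mathrm{midp}}(\mathcal{P})=\mu_{\mathrm{idp}}(\mathcal{P})=\mu_{\mathrm{Hilb}}(\mathcal{P})=\mu_{\mathrm{hole}}(\mathcal{P})=\mu_{\mathrm{Ehr}}(\mathcal{P})=j$.
   Context: An integral convex polytope is a convex polytope whose vertices lie in $\mathbb{Z}^N$; an empty simplex is an integral simplex whose only lattice points are its vertices; $k\mathcal{P}=\{k\alpha:\alpha\in\mathcal{P}\}$. A polytope $\mathcal{Q}$ has the integer decomposition property (IDP) if for every integer $k\ge 1$ and every $\alpha\in k\mathcal{Q}\cap\mathbb{Z}^N$ there are $\alpha_1,\dots,\alpha_k\in\mathcal{Q}\cap\mathbb{Z}^N$ with $\alpha=\alpha_1+\cdots+\alpha_k$; $\mathcal{Q}$ is very ample if this holds for all sufficiently large $k$. Let $\widetilde{\mathcal{P}}=\{(\alpha,1):\alpha\in\mathcal{P}\}$ and $\mathcal{C}(\mathcal{P})$ the cone generated by the vertices of $\widetilde{\mathcal{P}}$; the degree of $(\alpha,n)$ is $n$. $\mathcal{H}(\mathcal{C}(\mathcal{P}))$ is the minimal Hilbert basis of $\mathcal{C}(\mathcal{P})$. For an empty simplex $\mathcal{S}$ with vertices $v_i$, $\mathrm{Box}(\mathcal{S})=\{\sum_i r_i(v_i,1)\in\mathbb{Z}^{N+1}:0\le r_i<1\}$; $\mathrm{Box}(\mathcal{P})=\bigcup_{\mathcal{S}}\mathrm{Box}(\mathcal{S})\setminus\mathbb{Z}_{\ge0}(\widetilde{\mathcal{P}}\cap\mathbb{Z}^{N+1})$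 over all empty $d$-dimensional simplices $\mathcal{S}\subset\mathcal{P}$, $d=\dim\mathcal{P}$. The $\delta$-vector $(\delta_0,\dots,\delta_d)$ is defined by $\sum_{n\ge0}|n\mathcal{P}\cap\mathbb{Z}^N|t^n=(\sum_i\delta_it^i)/(1-t)^{d+1}$. $\mu_{\mathrm{va}}$ = smallest $k>0$ with $k\mathcal{P}$ very ample; $\mu_{\mathrm{midp}}$ = smallest $k>0$ with $k\mathcal{P}$ having IDP; $\mu_{\mathrm{idp}}$ = smallest $k>0$ with $n\mathcal{P}$ having IDP for all $n\ge k$; $\mu_{\mathrm{Hilb}}$ = maximal degree in $\mathcal{H}(\mathcal{C}(\mathcal{P}))$; $\mu_{\mathrm{hole}}$ = maximal degree in $\mathrm{Box}(\mathcal{P})$ (equal to $1$ if it is empty); $\mu_{\mathrm{Ehr}}$ = largest $i>0$ with $\delta_i\ne0$. *)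

theory Defs
  imports "HOL-Analysis.Analysis" "HOL-Computational_Algebra.Formal_Power_Series"
begin

definition lattice_pt :: "real^'n \<Rightarrow> bool" where
  "lattice_pt x \<longleftrightarrow> (\<forall>i. x $ i \<in> \<int>)"

definition lattice_pts :: "(real^'n) set \<Rightarrow> (real^'n) set" where
  "lattice_pts P = {x \<in> P. lattice_pt x}"

text \<open>Points of the lifted space R^N x R; the last coordinate is the degree.\<close>
definition lattice_pt2 :: "(real^'n) \<times> real \<Rightarrow> bool" where
  "lattice_pt2 z \<longleftrightarrow> lattice_pt (fst z) \<and> snd z \<in> \<int>"

definition deg :: "(real^'n) \<times> real \<Rightarrow> nat" where
  "deg z = nat \<lfloor>snd z\<rfloor>"

definition vertices :: "(real^'n) set \<Rightarrow> (real^'n) set" where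
  "vertices P = {v. v extreme_point_of P}"

definition integral_polytope :: "(real^'n) set \<Rightarrow> bool" where
  "integral_polytope P \<longleftrightarrow> polytope P \<and> P \<noteq> {} \<and> (\<forall>v \<in> vertices P. lattice_pt v)"

definition empty_simplex :: "int \<Rightarrow> (real^'n) set \<Rightarrow> bool" where
  "empty_simplex d S \<longleftrightarrow> integral_polytope S \<and> d simplex S \<and> lattice_pts S = vertices S"

definition dil :: "nat \<Rightarrow> (real^'n) set \<Rightarrow> (real^'n) set" where
  "dil k P = (\<lambda>x. real k *\<^sub>R x) ` P"

fun ksum :: "nat \<Rightarrow> ('a::monoid_add) set \<Rightarrow> 'a set" where
  "ksum 0 A = {0}"
| "ksum (Suc k) A = {a + b | a b. a \<in> A \<and> b \<in> ksum k A}"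

definition decomp_at :: "nat \<Rightarrow> (real^'n) set \<Rightarrow> bool" where
  "decomp_at k Q \<longleftrightarrow> (\<forall>\<alpha> \<in> lattice_pts (dil k Q). \<alpha> \<in> ksum k (lattice_pts Q))"

definition IDP :: "(real^'n) set \<Rightarrow> bool" where
  "IDP Q \<longleftrightarrow> (\<forall>k\<ge>1. decomp_at k Q)"

definition very_ample :: "(real^'n) set \<Rightarrow> bool" where
  "very_ample Q \<longleftrightarrow> (\<exists>k0. \<forall>k\<ge>k0. k \<ge> 1 \<longrightarrow> decomp_at k Q)"

definition mu_va :: "(real^'n) set \<Rightarrow> nat" where
  "mu_va P = (LEAST k. k > 0 \<and> very_ample (dil k P))"

definition mu_midp :: "(real^'n) set \<Rightarrow> nat" where
  "mu_midp P = (LEAST k. k > 0 \<and> IDP (dil k P))"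

definition mu_idp :: "(real^'n) set \<Rightarrow> nat" where
  "mu_idp P = (LEAST k. k > 0 \<and> (\<forall>n\<ge>k. IDP (dil n P)))"

definition cone_of :: "(real^'n) set \<Rightarrow> ((real^'n) \<times> real) set" where
  "cone_of P = {\<Sum>v\<in>F. c v *\<^sub>R (v, 1) | F c. finite F \<and> F \<subseteq> vertices P \<and> (\<forall>v\<in>F. c v \<ge> 0)}"

definition cone_lattice :: "(real^'n) set \<Rightarrow> ((real^'n) \<times> real) set" where
  "cone_lattice P = {z \<in> cone_of P. lattice_pt2 z}"

definition hilb :: "(real^'n) set \<Rightarrow> ((real^'n) \<times> real) set" where
  "hilb P = {z \<in> cone_lattice P. z \<noteq> 0 \<and>
     \<not> (\<exists>x y. x \<in> cone_lattice P \<and> y \<in> cone_lattice P \<and> x \<noteq> 0 \<and> y \<noteq> 0 \<and> z = x + y)}"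

definition mu_Hilb :: "(real^'n) set \<Rightarrow> nat" where
  "mu_Hilb P = Max (deg ` hilb P)"

definition box_simplex :: "(real^'n) set \<Rightarrow> ((real^'n) \<times> real) set" where
  "box_simplex S = {z. lattice_pt2 z \<and> (\<exists>r. (\<forall>v\<in>vertices S. 0 \<le> r v \<and> r v < 1) \<and>
       z = (\<Sum>v\<in>vertices S. r v *\<^sub>R (v, 1)))}"

definition nat_span :: "((real^'n) \<times> real) set \<Rightarrow> ((real^'n) \<times> real) set" where
  "nat_span A = {\<Sum>a\<in>F. real (c a) *\<^sub>R a | F c. finite F \<and> F \<subseteq> A}"

definition box_polytope :: "(real^'n) set \<Rightarrow> ((real^'n) \<times> real) set" where
  "box_polytope P = (\<Union> {box_simplex S | S. S \<subseteq> P \<and> empty_simplex (aff_dim P) S})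
      - nat_span ((\<lambda>x. (x, 1)) ` lattice_pts P)"

definition mu_hole :: "(real^'n) set \<Rightarrow> nat" where
  "mu_hole P = (if box_polytope P = {} then 1 else Max (deg ` box_polytope P))"

definition ehrhart_series :: "(real^'n) set \<Rightarrow> int fps" where
  "ehrhart_series P = Abs_fps (\<lambda>n. int (card (lattice_pts (dil n P))))"

definition delta :: "(real^'n) set \<Rightarrow> nat \<Rightarrow> int" where
  "delta P i = fps_nth (ehrhart_series P * (1 - fps_X) ^ (nat (aff_dim P) + 1)) i"

definition mu_Ehr :: "(real^'n) set \<Rightarrow> nat" where
  "mu_Ehr P = (GREATEST i. i > 0 \<and> delta P i \<noteq> 0)"

end

theory Submission
  imports Defs "HOL-Library.Function_Algebras"
begin

lemma sum_option: "sum f (UNIV :: 'a::finite option set) = f None + (\<Sum>i\<in>UNIV. f (Some i))"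
proof -
  have "sum f (UNIV :: 'a option set) = sum f (insert None (range Some))"
    by (simp add: UNIV_option_conv)
  also have "\<dots> = f None + sum f (range Some)" by (subst sum.insert) auto
  also have "sum f (range Some) = (\<Sum>i\<in>UNIV. f (Some i))"
    by (subst sum.reindex) (auto simp: inj_on_def)
  finally show ?thesis .
qed

locale cs =
  fixes a :: "'n::finite" and J :: "'n set" and j :: nat
  assumes aJ: "a \<notin> J" and cJ: "card J = j" and j2: "2 \<le> j"
begin

definition AA where "AA = insert a J"

definition w :: "real^'n" where
  "w = (\<chi> k. if k = a then real j else if k \<in> J then -1 else 0)"

fun vtx :: "'n option \<Rightarrow> real^'n" where
  "vtx None = 0"
| "vtx (Some i) = (if i = a then w else axis i 1)"

definition Phi :: "('n option \<Rightarrow> real) \<Rightarrow> real^'n" where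
  "Phi \<mu> = (\<Sum>p\<in>UNIV. \<mu> p *\<^sub>R vtx p)"

lemma Phi_comp: "Phi \<mu> $ k = (if k = a then real j * \<mu> (Some a) else if k \<in> J then \<mu> (Some k) - \<mu> (Some a) else \<mu> (Some k))"
proof -
  have "Phi \<mu> $ k = (\<Sum>i\<in>UNIV. \<mu> (Some i) * (vtx (Some i) $ k))"
    unfolding Phi_def by (simp add: sum_option)
  also have "\<dots> = \<mu> (Some a) * (w $ k) + (\<Sum>i\<in>UNIV - {a}. \<mu> (Some i) * (axis i 1 $ k))"
    by (subst sum.remove[of _ a]) auto
  also have "(\<Sum>i\<in>UNIV - {a}. \<mu> (Some i) * (axis i 1 $ k)) = (if k = a then 0 else \<mu> (Some k))"
    by (auto simp: axis_def if_distrib sum.delta' cong: if_cong)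
  finally show ?thesis using aJ by (auto simp: w_def)
qed

definition lam :: "real^'n \<Rightarrow> 'n \<Rightarrow> real" where
  "lam x i = (if i = a then x$a / j else if i \<in> J then x$i + x$a / j else x$i)"

definition crd :: "real \<Rightarrow> real^'n \<Rightarrow> 'n option \<Rightarrow> real" where
  "crd s x p = (case p of None \<Rightarrow> s - (\<Sum>i\<in>UNIV. lam x i) | Some i \<Rightarrow> lam x i)"

lemma jpos: "real j > 0" using j2 by simp

lemma crd_Phi: "crd (sum \<mu> UNIV) (Phi \<mu>) = \<mu>"
proof
  fix p
  have L: "lam (Phi \<mu>) i = \<mu> (Some i)" for i
    using jpos aJ by (auto simp: lam_def Phi_comp)
  show "crd (sum \<mu> UNIV) (Phi \<mu>) p = \<mu> p"
    by (cases p) (auto simp: crd_def L sum_option)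
qed

lemma Phi_crd: "Phi (crd s x) = x"
  using jpos aJ by (auto simp: vec_eq_iff Phi_comp crd_def lam_def)

lemma sum_crd: "sum (crd s x) UNIV = s"
  by (simp add: sum_option crd_def)

lemma Phi_inj: "Phi \<mu> = Phi \<nu> \<Longrightarrow> sum \<mu> UNIV = sum \<nu> UNIV \<Longrightarrow> \<mu> = \<nu>"
  by (metis crd_Phi)

lemma Phi_add: "Phi (\<mu> + \<nu>) = Phi \<mu> + Phi \<nu>"
  by (simp add: Phi_def scaleR_add_left sum.distrib)

lemma Phi_zero: "Phi 0 = 0"
  by (simp add: Phi_def)

lemma Phi_scale: "Phi (\<lambda>p. c * \<mu> p) = c *\<^sub>R Phi \<mu>"
  by (simp add: Phi_def scaleR_sum_right)

definition cc :: "'n option \<Rightarrow> real" where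
  "cc p = (case p of None \<Rightarrow> -1 | Some i \<Rightarrow> if i \<in> AA then 1 else 0)"

definition latt :: "('n option \<Rightarrow> real) \<Rightarrow> bool" where
  "latt \<mu> \<longleftrightarrow> (\<exists>t::int. \<forall>p. \<mu> p - of_int t * cc p / real j \<in> \<int>)"

lemma card_AA: "card AA = j + 1"
  using aJ cJ by (simp add: AA_def card_insert_if)

lemma aAA: "a \<in> AA" by (simp add: AA_def)

lemma sum_cc: "sum cc UNIV = real j"
proof -
  have "(\<Sum>i\<in>UNIV. cc (Some i)) = (\<Sum>i\<in>UNIV. if i \<in> AA then 1 else 0)"
    by (simp add: cc_def)
  also have "\<dots> = real (card AA)" by (simp add: sum.If_cases)
  finally show ?thesis by (simp add: sum_option card_AA cc_def)
qed

lemma latt_sum: assumes "latt \<mu>" shows "sum \<mu> UNIV \<in> \<int>"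
proof -
  obtain t :: int where t: "\<And>p. \<mu> p - of_int t * cc p / real j \<in> \<int>"
    using assms latt_def by blast
  have "sum \<mu> UNIV = (\<Sum>p\<in>UNIV. \<mu> p - of_int t * cc p / real j) + of_int t * sum cc UNIV / real j"
    by (simp add: sum_subtractf sum_divide_distrib sum_distrib_left)
  also have "\<dots> = (\<Sum>p\<in>UNIV. \<mu> p - of_int t * cc p / real j) + of_int t"
    using jpos by (simp add: sum_cc)
  finally show ?thesis using t by (simp add: Ints_sum)
qed

lemma latt_imp_lattice: assumes "latt \<mu>" shows "lattice_pt (Phi \<mu>)"
proof -
  obtain t :: int where t: "\<And>p. \<mu> p - of_int t * cc p / real j \<in> \<int>"
    using assms latt_def by blast
  have ta: "\<mu> (Some a) - of_int t / real j \<in> \<int>" using t[of "Some a"] by (simp add: cc_def aAA)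
  show ?thesis unfolding lattice_pt_def
  proof
    fix k
    show "Phi \<mu> $ k \<in> \<int>"
    proof (cases "k = a")
      case True
      have "real j * \<mu> (Some a) = real j * (\<mu> (Some a) - of_int t / real j) + of_int t"
        using jpos by (simp add: field_simps)
      then show ?thesis using True ta by (simp add: Phi_comp)
    next
      case F: False
      show ?thesis
      proof (cases "k \<in> J")
        case True
        have tk: "\<mu> (Some k) - of_int t / real j \<in> \<int>" using t[of "Some k"] True by (simp add: cc_def AA_def)
        have "\<mu> (Some k) - \<mu> (Some a) = (\<mu> (Some k) - of_int t / real j) - (\<mu> (Some a) - of_int t / real j)" by simp
        then have "\<mu> (Some k) - \<mu> (Some a) \<in> \<int>" using tk ta by (metis Ints_diff)
        then show ?thesis using F True by (simp add: Phi_comp)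
      next
        case False
        then show ?thesis using F t[of "Some k"] by (simp add: Phi_comp cc_def AA_def)
      qed
    qed
  qed
qed

lemma lattice_imp_latt: assumes "lattice_pt (Phi \<mu>)" "sum \<mu> UNIV \<in> \<int>" shows "latt \<mu>"
proof -
  define t where "t = \<lfloor>Phi \<mu> $ a\<rfloor>"
  have "Phi \<mu> $ a \<in> \<int>" using assms(1) lattice_pt_def by blast
  then have t1: "of_int t = real j * \<mu> (Some a)" unfolding t_def by (simp add: Phi_comp)
  define \<nu> where "\<nu> p = \<mu> p - of_int t * cc p / real j" for p
  have S: "\<nu> (Some i) \<in> \<int>" for i
  proof (cases "i = a")
    case True then show ?thesis using t1 jpos by (simp add: \<nu>_def cc_def aAA)
  next
    case F: False
    show ?thesis
    proof (cases "i \<in> J")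
      case True
      have "\<nu> (Some i) = Phi \<mu> $ i" using t1 jpos F True by (simp add: \<nu>_def cc_def AA_def Phi_comp)
      then show ?thesis using assms(1) lattice_pt_def by metis
    next
      case False
      have "\<nu> (Some i) = Phi \<mu> $ i" using F False by (simp add: \<nu>_def cc_def AA_def Phi_comp)
      then show ?thesis using assms(1) lattice_pt_def by metis
    qed
  qed
  have "sum \<nu> UNIV = sum \<mu> UNIV - of_int t * sum cc UNIV / real j"
    by (simp add: \<nu>_def sum_subtractf sum_divide_distrib sum_distrib_left)
  also have "\<dots> = sum \<mu> UNIV - of_int t" using jpos by (simp add: sum_cc)
  finally have sn: "sum \<nu> UNIV \<in> \<int>" using assms(2) by simp
  have "\<nu> None = sum \<nu> UNIV - (\<Sum>i\<in>UNIV. \<nu> (Some i))" by (simp add: sum_option)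
  then have "\<nu> None \<in> \<int>" using sn S by (simp add: Ints_sum Ints_diff)
  then have "\<forall>p. \<nu> p \<in> \<int>" using S by (metis not_Some_eq)
  then show ?thesis unfolding latt_def \<nu>_def by blast
qed

lemma LAT: "sum \<mu> UNIV \<in> \<int> \<Longrightarrow> lattice_pt (Phi \<mu>) \<longleftrightarrow> latt \<mu>"
  using latt_imp_lattice lattice_imp_latt by blast

definition beta :: "nat \<Rightarrow> 'n option \<Rightarrow> real" where
  "beta t p = (case p of None \<Rightarrow> if t = 0 then 0 else (real j - real t) / real j
      | Some i \<Rightarrow> if i \<in> AA then real t / real j else 0)"

definition h :: "nat \<Rightarrow> nat" where "h t = (if t = 0 then 0 else t + 1)"

lemma beta_ge: "t < j \<Longrightarrow> 0 \<le> beta t p"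
  by (cases p) (auto simp: beta_def)

lemma beta_lt: "t < j \<Longrightarrow> beta t p < 1"
  using jpos by (cases p) (auto simp: beta_def divide_less_eq)

lemma sum_beta: assumes "t < j" shows "sum (beta t) UNIV = real (h t)"
proof -
  have "(\<Sum>i\<in>UNIV. beta t (Some i)) = (\<Sum>i\<in>UNIV. if i \<in> AA then real t / real j else 0)"
    by (simp add: beta_def)
  also have "\<dots> = real (card AA) * (real t / real j)" by (simp add: sum.If_cases)
  finally have "(\<Sum>i\<in>UNIV. beta t (Some i)) = (real j + 1) * real t / real j" by (simp add: card_AA)
  then show ?thesis using jpos by (auto simp: sum_option h_def beta_def field_simps)
qed

lemma latt_beta: assumes "t < j" shows "latt (\<lambda>p. beta t p + real (q p))"
  unfolding latt_def
proof (intro exI allI)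
  fix p
  have "beta t p - real t * cc p / real j \<in> \<int>"
    using jpos by (cases p) (auto simp: beta_def cc_def field_simps)
  then have "beta t p - real t * cc p / real j + real (q p) \<in> \<int>" by (simp add: Ints_add)
  then show "beta t p + real (q p) - of_int (int t) * cc p / real j \<in> \<int>" by (simp add: algebra_simps)
qed

lemma nonneg_int_nat: assumes "x \<in> \<int>" "x > -1" shows "real (nat \<lfloor>x\<rfloor>) = x"
proof -
  obtain m where m: "x = of_int m" using assms(1) Ints_cases by blast
  then have "m \<ge> 0" using assms(2) by simp
  then show ?thesis using m by simp
qed

lemma DEC: assumes nn: "\<And>p. 0 \<le> \<mu> p" and L: "latt \<mu>"
  shows "\<exists>t<j. \<exists>q. \<mu> = (\<lambda>p. beta t p + real (q p))"
proof -
  obtain t0 :: int where t0: "\<And>p. \<mu> p - of_int t0 * cc p / real j \<in> \<int>"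
    using L latt_def by blast
  define t where "t = nat (t0 mod int j)"
  have tj: "t < j" using j2 by (simp add: t_def nat_less_iff)
  have rt: "real t = of_int (t0 mod int j)" using j2 by (simp add: t_def)
  have dm: "of_int t0 = real j * of_int (t0 div int j) + of_int (t0 mod int j)"
    by (metis div_mult_mod_eq mult.commute of_int_add of_int_mult of_int_of_nat_eq)
  have D: "of_int t0 * cc p / real j - beta t p \<in> \<int>" for p
  proof (cases p)
    case None
    show ?thesis
    proof (cases "t = 0")
      case True
      then have "of_int t0 * cc p / real j - beta t p = - of_int (t0 div int j)"
        using None rt dm jpos by (simp add: cc_def beta_def field_simps)
      then show ?thesis by simp
    next
      case False
      then have "of_int t0 * cc p / real j - beta t p = - of_int (t0 div int j) - 1"
        using None rt dm jpos by (simp add: cc_def beta_def field_simps)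
      then show ?thesis by simp
    qed
  next
    case (Some i)
    show ?thesis
    proof (cases "i \<in> AA")
      case True
      then have "of_int t0 * cc p / real j - beta t p = of_int (t0 div int j)"
        using Some rt dm jpos by (simp add: cc_def beta_def field_simps)
      then show ?thesis by simp
    next
      case False
      then show ?thesis using Some by (simp add: cc_def beta_def)
    qed
  qed
  have I: "\<mu> p - beta t p \<in> \<int>" for p
  proof -
    have "\<mu> p - beta t p = (\<mu> p - of_int t0 * cc p / real j) + (of_int t0 * cc p / real j - beta t p)" by simp
    then show ?thesis using t0[of p] D[of p] by (metis Ints_add)
  qed
  define q where "q p = nat \<lfloor>\<mu> p - beta t p\<rfloor>" for p
  have "real (q p) = \<mu> p - beta t p" for p
    unfolding q_def using I[of p] nn[of p] beta_lt[OF tj, of p] by (intro nonneg_int_nat) auto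
  then have "\<mu> = (\<lambda>p. beta t p + real (q p))" by auto
  then show ?thesis using tj by blast
qed

lemma DEC_uniq: assumes "t < j" "t' < j" "(\<lambda>p. beta t p + real (q p)) = (\<lambda>p. beta t' p + real (q' p))"
  shows "t = t' \<and> q = q'"
proof -
  have "beta t (Some a) + real (q (Some a)) = beta t' (Some a) + real (q' (Some a))"
    using assms(3) by metis
  then have "real t / real j + real (q (Some a)) = real t' / real j + real (q' (Some a))"
    by (simp add: beta_def aAA)
  then have "real t + real j * real (q (Some a)) = real t' + real j * real (q' (Some a))"
    using jpos by (simp add: field_simps)
  then have e: "t + j * q (Some a) = t' + j * q' (Some a)" by (metis of_nat_add of_nat_mult of_nat_eq_iff)
  have "t = (t + j * q (Some a)) mod j" using assms(1) by simp
  also have "\<dots> = (t' + j * q' (Some a)) mod j" using e by simp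
  also have "\<dots> = t'" using assms(2) by simp
  finally have tt: "t = t'" .
  have "q = q'"
  proof
    fix p show "q p = q' p" using assms(3) tt by (metis of_nat_eq_iff add_left_cancel)
  qed
  then show ?thesis using tt by simp
qed

definition delta_fn :: "'n option \<Rightarrow> 'n option \<Rightarrow> real" where
  "delta_fn p = (\<lambda>q. if q = p then 1 else 0)"

lemma vtx_Phi: "vtx p = Phi (delta_fn p)"
proof -
  have "(\<Sum>q\<in>UNIV. delta_fn p q *\<^sub>R vtx q) = (\<Sum>q\<in>UNIV. if q = p then vtx q else 0)"
    by (rule sum.cong) (auto simp: delta_fn_def)
  also have "\<dots> = vtx p" by simp
  finally show ?thesis by (simp add: Phi_def)
qed

lemma sum_delta_fn: "sum (delta_fn p) UNIV = 1"
  by (simp add: delta_fn_def)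

lemma inj_vtx: "inj vtx"
proof
  fix p p' assume "vtx p = vtx p'"
  then have "delta_fn p = delta_fn p'" using Phi_inj vtx_Phi sum_delta_fn by metis
  then show "p = p'" unfolding delta_fn_def by (metis zero_neq_one)
qed

lemma sum_range_vtx: "sum g (range vtx) = (\<Sum>p\<in>UNIV. g (vtx p))"
  using inj_vtx by (simp add: sum.reindex)

definition PP :: "(real^'n) set" where "PP = convex hull (range vtx)"

definition SS :: "real \<Rightarrow> ('n option \<Rightarrow> real) set" where
  "SS s = {\<mu>. (\<forall>p. 0 \<le> \<mu> p) \<and> sum \<mu> UNIV = s}"

lemma Phi_vtx_sum: "(\<Sum>p\<in>UNIV. u (vtx p) *\<^sub>R vtx p) = Phi (\<lambda>p. u (vtx p))"
  by (simp add: Phi_def)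

lemma PP_eq: "PP = Phi ` SS 1"
proof -
  have "PP = {y. \<exists>u. (\<forall>x\<in>range vtx. 0 \<le> u x) \<and> sum u (range vtx) = 1 \<and> (\<Sum>x\<in>range vtx. u x *\<^sub>R x) = y}"
    unfolding PP_def by (rule convex_hull_finite) simp
  also have "\<dots> = Phi ` SS 1"
  proof (intro set_eqI iffI)
    fix y assume "y \<in> {y. \<exists>u. (\<forall>x\<in>range vtx. 0 \<le> u x) \<and> sum u (range vtx) = 1 \<and> (\<Sum>x\<in>range vtx. u x *\<^sub>R x) = y}"
    then obtain u where u: "\<forall>x\<in>range vtx. 0 \<le> u x" "sum u (range vtx) = 1" "(\<Sum>x\<in>range vtx. u x *\<^sub>R x) = y" by blast
    have "y = Phi (\<lambda>p. u (vtx p))" using u(3) by (simp add: sum_range_vtx Phi_def)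
    moreover have "(\<lambda>p. u (vtx p)) \<in> SS 1" using u(1,2) by (simp add: SS_def sum_range_vtx)
    ultimately show "y \<in> Phi ` SS 1" by blast
  next
    fix y assume "y \<in> Phi ` SS 1"
    then obtain \<mu> where m: "\<mu> \<in> SS 1" "y = Phi \<mu>" by blast
    define u where "u x = \<mu> (inv vtx x)" for x
    have uv: "u (vtx p) = \<mu> p" for p using inj_vtx by (simp add: u_def)
    show "y \<in> {y. \<exists>u. (\<forall>x\<in>range vtx. 0 \<le> u x) \<and> sum u (range vtx) = 1 \<and> (\<Sum>x\<in>range vtx. u x *\<^sub>R x) = y}"
      using m by (intro CollectI exI[of _ u]) (auto simp: uv sum_range_vtx SS_def Phi_def)
  qed
  finally show ?thesis .
qed

lemma dil_PP: "dil s PP = Phi ` SS (real s)"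
proof (cases "s = 0")
  case True
  have "SS 0 = {0}"
  proof -
    have "\<mu> \<in> SS 0 \<Longrightarrow> \<mu> = 0" for \<mu>
      unfolding SS_def by (auto simp: sum_nonneg_eq_0_iff)
    moreover have "0 \<in> SS 0" by (simp add: SS_def)
    ultimately show ?thesis by blast
  qed
  moreover have "PP \<noteq> {}" unfolding PP_def by simp
  ultimately show ?thesis using True by (auto simp: dil_def Phi_zero)
next
  case False
  then have sp: "real s > 0" by simp
  have "dil s PP = (\<lambda>\<mu>. Phi (\<lambda>p. real s * \<mu> p)) ` SS 1"
    by (simp add: dil_def PP_eq image_image Phi_scale)
  also have "\<dots> = Phi ` ((\<lambda>\<mu>. (\<lambda>p. real s * \<mu> p)) ` SS 1)" by (simp add: image_image)
  also have "(\<lambda>\<mu>. (\<lambda>p. real s * \<mu> p)) ` SS 1 = SS (real s)"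
  proof (intro set_eqI iffI)
    fix \<nu> assume "\<nu> \<in> (\<lambda>\<mu>. (\<lambda>p. real s * \<mu> p)) ` SS 1"
    then show "\<nu> \<in> SS (real s)" using sp by (auto simp: SS_def sum_distrib_left[symmetric])
  next
    fix \<nu> assume n: "\<nu> \<in> SS (real s)"
    have "(\<lambda>p. \<nu> p / real s) \<in> SS 1" using n sp by (auto simp: SS_def sum_divide_distrib[symmetric])
    moreover have "\<nu> = (\<lambda>p. real s * (\<nu> p / real s))" using sp by auto
    ultimately show "\<nu> \<in> (\<lambda>\<mu>. (\<lambda>p. real s * \<mu> p)) ` SS 1" by (intro image_eqI[where x="\<lambda>p. \<nu> p / real s"]) auto
  qed
  finally show ?thesis .
qed

lemma aff_indep: "\<not> affine_dependent (range vtx)"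
proof
  assume "affine_dependent (range vtx)"
  then obtain U where U: "sum U (range vtx) = 0" "\<exists>v\<in>range vtx. U v \<noteq> 0" "(\<Sum>v\<in>range vtx. U v *\<^sub>R v) = 0"
    using affine_dependent_explicit_finite[of "range vtx"] by auto
  have "Phi (\<lambda>p. U (vtx p)) = Phi (\<lambda>p. 0)" using U(3) by (simp add: sum_range_vtx Phi_def)
  moreover have "sum (\<lambda>p. U (vtx p)) UNIV = sum (\<lambda>p. 0) UNIV" using U(1) by (simp add: sum_range_vtx)
  ultimately have "(\<lambda>p. U (vtx p)) = (\<lambda>p. 0)" by (rule Phi_inj)
  then show False using U(2) by (metis image_iff)
qed

lemma vertices_PP: "vertices PP = range vtx"
  unfolding vertices_def PP_def using extreme_point_of_convex_hull_affine_independent[OF aff_indep] by auto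

lemma card_vtx: "card (range vtx) = CARD('n) + 1"
  using inj_vtx by (simp add: card_image card_UNIV_option)

lemma simplex_PP: "int (CARD('n)) simplex PP"
  unfolding PP_def by (rule simplex_convex_hull) (simp add: aff_indep card_vtx)

lemma aff_dim_PP: "aff_dim PP = int (CARD('n))"
  using simplex_PP aff_dim_simplex by blast

definition MM :: "nat \<Rightarrow> ('n option \<Rightarrow> real) set" where
  "MM s = {\<mu>. (\<forall>p. 0 \<le> \<mu> p) \<and> sum \<mu> UNIV = real s \<and> latt \<mu>}"

lemma latt_pts_dil: "lattice_pts (dil s PP) = Phi ` MM s"
proof -
  have "lattice_pts (dil s PP) = {x \<in> Phi ` SS (real s). lattice_pt x}" by (simp add: lattice_pts_def dil_PP)
  also have "\<dots> = Phi ` MM s"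
  proof (intro set_eqI iffI)
    fix x assume "x \<in> {x \<in> Phi ` SS (real s). lattice_pt x}"
    then obtain \<mu> where "\<mu> \<in> SS (real s)" "x = Phi \<mu>" "lattice_pt x" by blast
    then show "x \<in> Phi ` MM s" using LAT[of \<mu>] by (auto simp: SS_def MM_def)
  next
    fix x assume "x \<in> Phi ` MM s"
    then obtain \<mu> where "\<mu> \<in> MM s" "x = Phi \<mu>" by blast
    then show "x \<in> {x \<in> Phi ` SS (real s). lattice_pt x}" using LAT[of \<mu>] by (auto simp: SS_def MM_def)
  qed
  finally show ?thesis .
qed

lemma dil_1: "dil 1 X = X" by (simp add: dil_def)

lemma MM1: "MM 1 = range delta_fn"
proof (intro set_eqI iffI)
  fix \<mu> assume m: "\<mu> \<in> MM 1"
  then obtain t q where tq: "t < j" "\<mu> = (\<lambda>p. beta t p + real (q p))" using DEC MM_def by blast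
  have s1: "sum \<mu> UNIV = 1" using m MM_def by simp
  have "t = 0"
  proof (rule ccontr)
    assume "t \<noteq> 0"
    then have "real (h t) \<ge> 2" by (simp add: h_def)
    moreover have "sum \<mu> UNIV = real (h t) + real (sum q UNIV)" using tq sum_beta[OF tq(1)] by (simp add: sum.distrib)
    ultimately show False using s1 by simp
  qed
  then have mq: "\<mu> = (\<lambda>p. real (q p))" using tq by (simp add: beta_def fun_eq_iff split: option.splits)
  then have sq: "sum q UNIV = 1" using s1 by (metis of_nat_eq_1_iff of_nat_sum)
  then obtain p where "q p \<noteq> 0" by (metis (mono_tags) sum.neutral zero_neq_one)
  moreover have "q p \<le> sum q UNIV" by (rule member_le_sum) auto
  then have "q p \<le> 1" using sq by simp
  ultimately have qp: "q p = 1" by simp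
  have "\<forall>r. r \<noteq> p \<longrightarrow> q r = 0"
  proof (intro allI impI)
    fix r assume rp: "r \<noteq> p"
    have "sum q {p, r} \<le> sum q UNIV" by (rule sum_mono2) auto
    then have "q p + q r \<le> sum q UNIV" using rp by simp
    then show "q r = 0" using sq qp by simp
  qed
  then have "\<mu> = delta_fn p" using mq qp by (auto simp: delta_fn_def)
  then show "\<mu> \<in> range delta_fn" by blast
next
  fix \<mu> assume "\<mu> \<in> range delta_fn"
  then obtain p where p: "\<mu> = delta_fn p" by blast
  have "delta_fn p = (\<lambda>r. beta 0 r + real (if r = p then 1 else 0))"
    by (auto simp: delta_fn_def beta_def split: option.splits)
  then have "latt (delta_fn p)" using latt_beta[of 0] j2 by simp
  then show "\<mu> \<in> MM 1" using p by (simp add: MM_def delta_fn_def)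
qed

lemma latt_pts_PP: "lattice_pts PP = range vtx"
proof -
  have "lattice_pts PP = Phi ` MM 1" using latt_pts_dil[of 1] by (simp add: dil_def)
  also have "\<dots> = range vtx" unfolding MM1 image_image vtx_Phi by simp
  finally show ?thesis .
qed

lemma empty_simplex_PP: "empty_simplex (int CARD('n)) PP"
  unfolding empty_simplex_def integral_polytope_def
  using simplex_PP simplex_imp_polytope[OF simplex_PP] vertices_PP latt_pts_PP
  by (auto simp: PP_def lattice_pts_def)

definition Psi :: "('n option \<Rightarrow> real) \<Rightarrow> (real^'n) \<times> real" where
  "Psi \<mu> = (Phi \<mu>, sum \<mu> UNIV)"

lemma Psi_inj: "Psi \<mu> = Psi \<nu> \<Longrightarrow> \<mu> = \<nu>"
  unfolding Psi_def using Phi_inj by auto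

lemma Psi_add: "Psi (\<mu> + \<nu>) = Psi \<mu> + Psi \<nu>"
  by (simp add: Psi_def Phi_add sum.distrib)

lemma Psi_zero: "Psi 0 = 0"
  by (simp add: Psi_def Phi_zero zero_prod_def)

lemma Psi_eq_0: "Psi \<mu> = 0 \<longleftrightarrow> \<mu> = 0"
  using Psi_inj Psi_zero by metis

lemma pair_sum: "(\<Sum>x\<in>A. c x *\<^sub>R (x, 1::real)) = ((\<Sum>x\<in>A. c x *\<^sub>R x), (\<Sum>x\<in>A. c x))"
  by (simp add: prod_eq_iff fst_sum snd_sum)

lemma Psi_sum: "(\<Sum>p\<in>UNIV. \<mu> p *\<^sub>R (vtx p, 1::real)) = Psi \<mu>"
  unfolding Psi_def Phi_def by (simp add: prod_eq_iff fst_sum snd_sum)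

lemma Psi_sum': "(\<Sum>p\<in>UNIV. (\<mu> p *\<^sub>R vtx p, \<mu> p)) = Psi \<mu>"
  using Psi_sum[of \<mu>] by simp

lemma restrict_sum:
  fixes g :: "'n option \<Rightarrow> 'b" and f :: "'b \<Rightarrow> 'c::comm_monoid_add"
  assumes "inj g" "F \<subseteq> range g"
  shows "sum f F = (\<Sum>p\<in>UNIV. if g p \<in> F then f (g p) else 0)"
proof -
  have "sum f F = sum f (range g \<inter> F)" using assms(2) by (simp add: Int_absorb1)
  also have "\<dots> = (\<Sum>x\<in>range g. if x \<in> F then f x else 0)" by (rule sum.inter_restrict) simp
  also have "\<dots> = (\<Sum>p\<in>UNIV. if g p \<in> F then f (g p) else 0)" using assms(1) by (simp add: sum.reindex)
  finally show ?thesis .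
qed

definition NN where "NN = {\<mu> :: 'n option \<Rightarrow> real. \<forall>p. 0 \<le> \<mu> p}"

lemma cone_PP: "cone_of PP = Psi ` NN"
proof (intro set_eqI iffI)
  fix z assume "z \<in> cone_of PP"
  then obtain F c where Fc: "z = (\<Sum>v\<in>F. c v *\<^sub>R (v, 1))" "finite F" "F \<subseteq> range vtx" "\<forall>v\<in>F. c v \<ge> 0"
    unfolding cone_of_def vertices_PP by blast
  define \<mu> where "\<mu> p = (if vtx p \<in> F then c (vtx p) else 0)" for p
  have "z = (\<Sum>p\<in>UNIV. if vtx p \<in> F then c (vtx p) *\<^sub>R (vtx p, 1) else 0)"
    unfolding Fc(1) by (rule restrict_sum[OF inj_vtx Fc(3), of "\<lambda>v. c v *\<^sub>R (v, 1)"])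
  also have "\<dots> = (\<Sum>p\<in>UNIV. \<mu> p *\<^sub>R (vtx p, 1))" by (rule sum.cong) (auto simp: \<mu>_def zero_prod_def)
  finally have "z = Psi \<mu>" by (simp add: Psi_sum')
  moreover have "\<mu> \<in> NN" using Fc(4) by (auto simp: \<mu>_def NN_def)
  ultimately show "z \<in> Psi ` NN" by blast
next
  fix z assume "z \<in> Psi ` NN"
  then obtain \<mu> where m: "\<mu> \<in> NN" "z = Psi \<mu>" by blast
  define c where "c x = \<mu> (inv vtx x)" for x
  have cv: "c (vtx p) = \<mu> p" for p using inj_vtx by (simp add: c_def)
  have "z = (\<Sum>v\<in>range vtx. c v *\<^sub>R (v, 1))"
    using m(2) inj_vtx by (simp add: sum.reindex cv Psi_sum')
  moreover have "\<forall>v\<in>range vtx. c v \<ge> 0" using m(1) by (auto simp: cv NN_def)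
  ultimately show "z \<in> cone_of PP" unfolding cone_of_def vertices_PP
    by (intro CollectI exI[of _ "range vtx"] exI[of _ c]) auto
qed

definition LL where "LL = {\<mu>. (\<forall>p. 0 \<le> \<mu> p) \<and> latt \<mu>}"

lemma lattice_pt2_Psi: "lattice_pt2 (Psi \<mu>) \<longleftrightarrow> latt \<mu>"
  unfolding lattice_pt2_def Psi_def using LAT latt_sum by auto

lemma cone_lattice_PP: "cone_lattice PP = Psi ` LL"
  unfolding cone_lattice_def cone_PP using lattice_pt2_Psi by (auto simp: LL_def NN_def)

lemma deg_Psi: "deg (Psi \<mu>) = nat \<lfloor>sum \<mu> UNIV\<rfloor>"
  by (simp add: deg_def Psi_def)

lemma beta0: "beta 0 = 0"
  by (auto simp: beta_def fun_eq_iff split: option.splits)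

lemma LL_nat: "(\<lambda>p. real (q p)) \<in> LL"
  using latt_beta[of 0 q] j2 by (simp add: LL_def beta0)

lemma LL_beta: "t < j \<Longrightarrow> beta t \<in> LL"
  using latt_beta[of t "\<lambda>_. 0"] beta_ge by (simp add: LL_def)

lemma beta_ne0: "0 < t \<Longrightarrow> beta t \<noteq> 0"
proof
  assume "0 < t" "beta t = 0"
  then have "beta t (Some a) = 0" by simp
  then show False using \<open>0 < t\<close> jpos by (simp add: beta_def aAA)
qed

lemma h_le: "t < j \<Longrightarrow> h t \<le> j" by (simp add: h_def)

lemma hilb_bound: assumes "z \<in> hilb PP" shows "deg z \<le> j"
proof -
  from assms obtain \<mu> where m: "\<mu> \<in> LL" "z = Psi \<mu>"
    unfolding hilb_def cone_lattice_PP by blast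
  have irr: "\<not> (\<exists>x y. x \<in> Psi ` LL \<and> y \<in> Psi ` LL \<and> x \<noteq> 0 \<and> y \<noteq> 0 \<and> z = x + y)"
    using assms unfolding hilb_def cone_lattice_PP by blast
  obtain t q where tq: "t < j" "\<mu> = (\<lambda>p. beta t p + real (q p))" using DEC m(1) LL_def by blast
  have sm: "sum \<mu> UNIV = real (h t) + real (sum q UNIV)" using tq sum_beta[OF tq(1)] by (simp add: sum.distrib)
  have "sum \<mu> UNIV \<le> real j"
  proof (rule ccontr)
    assume "\<not> sum \<mu> UNIV \<le> real j"
    then have sq: "sum q UNIV > j - h t" using sm h_le[OF tq(1)] by linarith
    then obtain p0 where p0: "q p0 \<noteq> 0" by (metis (mono_tags) sum.neutral less_nat_zero_code)
    show False
    proof (cases "t = 0")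
      case False
      have "\<mu> = beta t + (\<lambda>p. real (q p))" using tq by auto
      moreover have "(\<lambda>p. real (q p)) \<noteq> 0" using p0 by (metis of_nat_eq_0_iff zero_fun_def)
      ultimately show False using irr m(2) LL_beta[OF tq(1)] LL_nat[of q] beta_ne0[of t] False
        Psi_add Psi_eq_0 by blast
    next
      case True
      define q' where "q' = q(p0 := q p0 - 1)"
      have "\<mu> = delta_fn p0 + (\<lambda>p. real (q' p))"
        using tq True p0 by (auto simp: beta0 q'_def delta_fn_def fun_eq_iff of_nat_diff)
      moreover have "delta_fn p0 \<noteq> 0" by (metis delta_fn_def one_neq_zero zero_fun_def)
      moreover have "delta_fn p0 \<in> LL"
      proof -
        have "delta_fn p0 = (\<lambda>p. real (if p = p0 then 1 else 0))" by (auto simp: delta_fn_def)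
        then show ?thesis using LL_nat by metis
      qed
      moreover have "(\<lambda>p. real (q' p)) \<noteq> 0"
      proof -
        have "j - h t \<ge> 2" using True j2 by (simp add: h_def)
        then have "sum q UNIV \<ge> 3" using sq by linarith
        moreover have "sum q UNIV = q p0 + sum q (UNIV - {p0})" by (simp add: sum.remove)
        moreover have "sum q' UNIV = q' p0 + sum q' (UNIV - {p0})" by (simp add: sum.remove)
        moreover have "sum q' (UNIV - {p0}) = sum q (UNIV - {p0})" by (rule sum.cong) (auto simp: q'_def)
        moreover have "q' p0 = q p0 - 1" by (simp add: q'_def)
        ultimately have "sum q' UNIV \<noteq> 0" by arith
        then obtain p1 where "q' p1 \<noteq> 0" by (metis (mono_tags) sum.neutral)
        then show ?thesis by (metis of_nat_eq_0_iff zero_fun_def)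
      qed
      ultimately show False using irr m(2) LL_nat[of q'] Psi_add Psi_eq_0 by blast
    qed
  qed
  then show ?thesis using m(2) by (simp add: deg_Psi nat_le_iff floor_le_iff)
qed

lemma small_latt: assumes "\<mu> \<in> LL" "\<And>p. \<mu> p < 1" shows "\<exists>t<j. \<mu> = beta t"
proof -
  obtain t q where tq: "t < j" "\<mu> = (\<lambda>p. beta t p + real (q p))" using DEC assms(1) LL_def by blast
  have "q p = 0" for p
  proof -
    have "beta t p + real (q p) < 1" using assms(2) tq(2) by metis
    then show ?thesis using beta_ge[OF tq(1), of p] by simp
  qed
  then show ?thesis using tq by auto
qed

lemma beta_top_None: "beta (j - 1) None = 1 / real j"
  using j2 jpos by (simp add: beta_def of_nat_diff)

lemma nonneg_None: assumes "\<nu> \<in> LL" "\<nu> \<noteq> 0" "\<And>p. \<nu> p < 1" shows "\<nu> None \<ge> 1 / real j"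
proof -
  obtain t where t: "t < j" "\<nu> = beta t" using small_latt assms by blast
  then have "t \<noteq> 0" using assms(2) beta0 by auto
  then show ?thesis using t jpos by (simp add: beta_def divide_right_mono)
qed

lemma hilb_top: "Psi (beta (j - 1)) \<in> hilb PP"
proof -
  have tj: "j - 1 < j" using j2 by simp
  have ne: "beta (j - 1) \<noteq> 0" using j2 beta_ne0 by simp
  have "\<not> (\<exists>\<nu> \<rho>. \<nu> \<in> LL \<and> \<rho> \<in> LL \<and> \<nu> \<noteq> 0 \<and> \<rho> \<noteq> 0 \<and> beta (j - 1) = \<nu> + \<rho>)"
  proof
    assume "\<exists>\<nu> \<rho>. \<nu> \<in> LL \<and> \<rho> \<in> LL \<and> \<nu> \<noteq> 0 \<and> \<rho> \<noteq> 0 \<and> beta (j - 1) = \<nu> + \<rho>"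
    then obtain \<nu> \<rho> where nr: "\<nu> \<in> LL" "\<rho> \<in> LL" "\<nu> \<noteq> 0" "\<rho> \<noteq> 0" "beta (j - 1) = \<nu> + \<rho>" by blast
    have b: "beta (j - 1) p = \<nu> p + \<rho> p" for p using nr(5) by (metis plus_fun_apply)
    have "\<nu> p < 1" for p using b[of p] beta_lt[OF tj, of p] nr(2) by (auto simp: LL_def intro: le_less_trans[of _ "\<nu> p + \<rho> p"])
    then have n1: "\<nu> None \<ge> 1 / real j" using nonneg_None nr by blast
    have "\<rho> p < 1" for p using b[of p] beta_lt[OF tj, of p] nr(1) by (auto simp: LL_def intro: le_less_trans[of _ "\<nu> p + \<rho> p"])
    then have n2: "\<rho> None \<ge> 1 / real j" using nonneg_None nr by blast
    have "1 / real j > 0" using jpos by simp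
    then show False using n1 n2 b[of None] beta_top_None by linarith
  qed
  then show ?thesis unfolding hilb_def cone_lattice_PP
    using LL_beta[OF tj] ne Psi_eq_0 Psi_inj Psi_add by (auto simp del: Psi_eq_0) (metis Psi_add Psi_inj)
qed

lemma sum_beta_top: "sum (beta (j - 1)) UNIV = real j"
  using sum_beta[of "j - 1"] j2 by (simp add: h_def)

lemma deg_top: "deg (Psi (beta (j - 1))) = j"
  unfolding deg_Psi sum_beta_top by simp

lemma mu_Hilb_PP: "mu_Hilb PP = j"
proof -
  have "deg ` hilb PP \<subseteq> {..j}" using hilb_bound by auto
  then have "finite (deg ` hilb PP)" using finite_subset by blast
  moreover have "j \<in> deg ` hilb PP" using hilb_top deg_top by (metis image_eqI)
  ultimately show ?thesis unfolding mu_Hilb_def using hilb_bound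
    by (intro Max_eqI) auto
qed

lemma vertices_sub_simplex:
  assumes "S \<subseteq> PP" "empty_simplex (aff_dim PP) S" shows "vertices S = range vtx"
proof -
  have es: "int CARD('n) simplex S" "lattice_pts S = vertices S"
    using assms(2) aff_dim_PP by (auto simp: empty_simplex_def)
  obtain C where C: "\<not> affine_dependent C" "int (card C) = int CARD('n) + 1" "S = convex hull C"
    using es(1) unfolding simplex_def by blast
  have vC: "vertices S = C" unfolding vertices_def C(3)
    using extreme_point_of_convex_hull_affine_independent[OF C(1)] by auto
  have "lattice_pts S \<subseteq> lattice_pts PP" using assms(1) by (auto simp: lattice_pts_def)
  then have sub: "C \<subseteq> range vtx" using es(2) vC latt_pts_PP by auto
  have "card C = card (range vtx)" using C(2) card_vtx by simp
  then have "C = range vtx" using card_subset_eq[OF _ sub] by simp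
  then show ?thesis using vC by simp
qed

lemma box_simplex_eq: assumes "vertices S = range vtx"
  shows "box_simplex S = Psi ` {\<mu>. (\<forall>p. \<mu> p < 1) \<and> \<mu> \<in> LL}"
proof (intro set_eqI iffI)
  fix z assume "z \<in> box_simplex S"
  then obtain r where r: "lattice_pt2 z" "\<forall>v\<in>range vtx. 0 \<le> r v \<and> r v < 1" "z = (\<Sum>v\<in>range vtx. r v *\<^sub>R (v, 1))"
    unfolding box_simplex_def assms by blast
  have z: "z = Psi (\<lambda>p. r (vtx p))" using r(3) by (simp add: sum_range_vtx Psi_sum')
  then show "z \<in> Psi ` {\<mu>. (\<forall>p. \<mu> p < 1) \<and> \<mu> \<in> LL}"
    using r(1,2) lattice_pt2_Psi by (auto simp: LL_def)
next
  fix z assume "z \<in> Psi ` {\<mu>. (\<forall>p. \<mu> p < 1) \<and> \<mu> \<in> LL}"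
  then obtain \<mu> where m: "\<forall>p. \<mu> p < 1" "\<mu> \<in> LL" "z = Psi \<mu>" by blast
  define r where "r x = \<mu> (inv vtx x)" for x
  have rv: "r (vtx p) = \<mu> p" for p using inj_vtx by (simp add: r_def)
  have "z = (\<Sum>v\<in>range vtx. r v *\<^sub>R (v, 1))" using m(3) by (simp add: sum_range_vtx rv Psi_sum')
  moreover have "\<forall>v\<in>range vtx. 0 \<le> r v \<and> r v < 1" using m(1,2) by (auto simp: rv LL_def)
  moreover have "lattice_pt2 z" using m(2,3) lattice_pt2_Psi by (simp add: LL_def)
  ultimately show "z \<in> box_simplex S" unfolding box_simplex_def assms by blast
qed

lemma not_Int_frac: assumes "0 < x" "x < 1" shows "(x::real) \<notin> \<int>"
proof
  assume "x \<in> \<int>" then obtain m where "x = of_int m" using Ints_cases by blast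
  then show False using assms by simp
qed

lemma top_not_nat_span: "Psi (beta (j - 1)) \<notin> nat_span ((\<lambda>x. (x, 1)) ` lattice_pts PP)"
proof
  assume "Psi (beta (j - 1)) \<in> nat_span ((\<lambda>x. (x, 1)) ` lattice_pts PP)"
  then obtain F c where Fc0: "Psi (beta (j - 1)) = (\<Sum>x\<in>F. real (c x) *\<^sub>R x)" "F \<subseteq> (\<lambda>x. (x, 1)) ` lattice_pts PP"
    unfolding nat_span_def mem_Collect_eq by blast
  have "(\<lambda>x. (x, 1::real)) ` lattice_pts PP = range (\<lambda>p. (vtx p, 1::real))"
    by (simp add: latt_pts_PP image_image)
  then have Fc: "Psi (beta (j - 1)) = (\<Sum>x\<in>F. real (c x) *\<^sub>R x)" "F \<subseteq> range (\<lambda>p. (vtx p, 1::real))"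
    using Fc0 by auto
  define g where "g p = (vtx p, 1::real)" for p
  have ig: "inj g" using inj_vtx by (auto simp: inj_def g_def)
  define \<nu> where "\<nu> p = (if g p \<in> F then real (c (g p)) else 0)" for p
  have "(\<Sum>x\<in>F. real (c x) *\<^sub>R x) = (\<Sum>p\<in>UNIV. if g p \<in> F then real (c (g p)) *\<^sub>R g p else 0)"
    by (rule restrict_sum[OF ig]) (use Fc(2) in \<open>simp add: g_def\<close>)
  also have "\<dots> = (\<Sum>p\<in>UNIV. \<nu> p *\<^sub>R (vtx p, 1))" by (rule sum.cong) (auto simp: \<nu>_def g_def zero_prod_def)
  finally have "Psi (beta (j - 1)) = Psi \<nu>" using Fc(1) Psi_sum[of \<nu>] by simp
  then have "beta (j - 1) = \<nu>" by (rule Psi_inj)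
  then have "beta (j - 1) (Some a) \<in> \<int>" by (simp add: \<nu>_def)
  moreover have "beta (j - 1) (Some a) = real (j - 1) / real j" by (simp add: beta_def aAA)
  moreover have "0 < real (j - 1) / real j" "real (j - 1) / real j < 1" using j2 by auto
  ultimately show False using not_Int_frac by metis
qed

lemma mu_hole_PP: "mu_hole PP = j"
proof -
  have tj: "j - 1 < j" using j2 by simp
  have PPin: "box_simplex PP \<in> {box_simplex S | S. S \<subseteq> PP \<and> empty_simplex (aff_dim PP) S}"
    using empty_simplex_PP aff_dim_PP by auto
  have inbs: "Psi (beta (j - 1)) \<in> box_simplex PP"
    unfolding box_simplex_eq[OF vertices_PP] using LL_beta[OF tj] beta_lt[OF tj] by blast
  have top: "Psi (beta (j - 1)) \<in> box_polytope PP"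
    unfolding box_polytope_def
  proof (rule DiffI)
    show "Psi (beta (j - 1)) \<in> \<Union> {box_simplex S |S. S \<subseteq> PP \<and> empty_simplex (aff_dim PP) S}"
      by (rule UnionI[OF PPin inbs])
    show "Psi (beta (j - 1)) \<notin> nat_span ((\<lambda>x. (x, 1)) ` lattice_pts PP)" by (rule top_not_nat_span)
  qed
  have bd: "deg z \<le> j" if "z \<in> box_polytope PP" for z
  proof -
    have "z \<in> \<Union>{box_simplex S |S. S \<subseteq> PP \<and> empty_simplex (aff_dim PP) S}"
      using that unfolding box_polytope_def by (rule DiffD1)
    then obtain S where S: "S \<subseteq> PP" "empty_simplex (aff_dim PP) S" "z \<in> box_simplex S"
      by auto
    then obtain \<mu> where m: "\<forall>p. \<mu> p < 1" "\<mu> \<in> LL" "z = Psi \<mu>"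
      using box_simplex_eq[OF vertices_sub_simplex[OF S(1,2)]] by blast
    obtain t where t: "t < j" "\<mu> = beta t" using small_latt m by blast
    show ?thesis using m(3) t sum_beta[OF t(1)] h_le[OF t(1)] by (simp add: deg_Psi)
  qed
  have "deg ` box_polytope PP \<subseteq> {..j}" using bd by auto
  then have "finite (deg ` box_polytope PP)" using finite_subset by blast
  moreover have "j \<in> deg ` box_polytope PP" using top deg_top by (metis image_eqI)
  ultimately have "Max (deg ` box_polytope PP) = j" using bd by (intro Max_eqI) auto
  moreover have "box_polytope PP \<noteq> {}" using top by blast
  ultimately show ?thesis unfolding mu_hole_def by simp
qed

lemma ksum_image:
  fixes f :: "'a::monoid_add \<Rightarrow> 'b::monoid_add"
  assumes add: "\<And>x y. f (x + y) = f x + f y" and z: "f 0 = 0"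
  shows "ksum k (f ` A) = f ` ksum k A"
proof (induction k)
  case 0 then show ?case using z by simp
next
  case (Suc k)
  have "ksum (Suc k) (f ` A) = {x + y |x y. x \<in> f ` A \<and> y \<in> f ` ksum k A}" using Suc by simp
  also have "\<dots> = f ` {x + y |x y. x \<in> A \<and> y \<in> ksum k A}"
  proof (intro set_eqI iffI)
    fix z assume "z \<in> {x + y |x y. x \<in> f ` A \<and> y \<in> f ` ksum k A}"
    then obtain x y where "z = f x + f y" "x \<in> A" "y \<in> ksum k A" by blast
    then have "z = f (x + y)" "x + y \<in> {x + y |x y. x \<in> A \<and> y \<in> ksum k A}" using add by auto
    then show "z \<in> f ` {x + y |x y. x \<in> A \<and> y \<in> ksum k A}" by blast
  next
    fix z assume "z \<in> f ` {x + y |x y. x \<in> A \<and> y \<in> ksum k A}"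
    then obtain x y where "z = f (x + y)" "x \<in> A" "y \<in> ksum k A" by blast
    then have "z = f x + f y" "f x \<in> f ` A" "f y \<in> f ` ksum k A" using add by auto
    then show "z \<in> {x + y |x y. x \<in> f ` A \<and> y \<in> f ` ksum k A}" by blast
  qed
  finally show ?case by simp
qed

lemma ksum_sum:
  assumes "\<And>x. x \<in> A \<Longrightarrow> sum x UNIV = (s::real)" "y \<in> ksum k A"
  shows "sum y UNIV = real k * s"
  using assms(2)
proof (induction k arbitrary: y)
  case 0 then show ?case by simp
next
  case (Suc k)
  then obtain x z where "y = x + z" "x \<in> A" "z \<in> ksum k A" by auto
  then show ?case using Suc.IH assms(1) by (simp add: sum.distrib algebra_simps)
qed

lemma dil_dil: "dil k (dil n X) = dil (k * n) X"
  by (simp add: dil_def image_image)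

lemma latt_pts_ksum: "ksum K (lattice_pts (dil n PP)) = Phi ` ksum K (MM n)"
  unfolding latt_pts_dil by (rule ksum_image) (auto simp: Phi_add Phi_zero)

lemma decomp_of: assumes "MM (K * n) \<subseteq> ksum K (MM n)" shows "decomp_at K (dil n PP)"
  unfolding decomp_at_def dil_dil latt_pts_ksum unfolding latt_pts_dil using assms by blast

lemma not_decomp_of:
  assumes "\<mu> \<in> MM (K * n)" "\<mu> \<notin> ksum K (MM n)" shows "\<not> decomp_at K (dil n PP)"
proof
  assume "decomp_at K (dil n PP)"
  then have "Phi \<mu> \<in> Phi ` ksum K (MM n)"
    unfolding decomp_at_def dil_dil latt_pts_ksum unfolding latt_pts_dil using assms(1) by blast
  then obtain y where y: "y \<in> ksum K (MM n)" "Phi \<mu> = Phi y" by blast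
  have "sum y UNIV = real K * real n" by (rule ksum_sum[OF _ y(1)]) (simp add: MM_def)
  moreover have "sum \<mu> UNIV = real K * real n" using assms(1) by (simp add: MM_def)
  ultimately have "\<mu> = y" using Phi_inj y(2) by simp
  then show False using assms(2) y(1) by simp
qed

lemma SPLIT: "(r::nat) \<le> sum (q :: 'n option \<Rightarrow> nat) UNIV \<Longrightarrow> \<exists>q'. (\<forall>p. q' p \<le> q p) \<and> sum q' UNIV = r"
proof (induction r)
  case 0 then show ?case by (intro exI[of _ "\<lambda>_. 0"]) simp
next
  case (Suc r)
  then obtain q'' where q'': "\<forall>p. q'' p \<le> q p" "sum q'' UNIV = r" by force
  have "\<exists>p. q'' p < q p"
  proof (rule ccontr)
    assume "\<not> (\<exists>p. q'' p < q p)"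
    then have "\<forall>p. q p \<le> q'' p" by (simp add: not_less)
    then have "sum q UNIV \<le> sum q'' UNIV" by (intro sum_mono) auto
    then show False using Suc.prems q''(2) by simp
  qed
  then obtain p where p: "q'' p < q p" by blast
  define q' where "q' x = q'' x + (if x = p then 1 else 0)" for x
  have "\<forall>x. q' x \<le> q x" using q''(1) p by (auto simp: q'_def Suc_le_eq)
  moreover have "sum q' UNIV = Suc r" using q''(2) by (simp add: q'_def sum.distrib)
  ultimately show ?case by blast
qed

lemma MM_beta: "t < j \<Longrightarrow> (\<lambda>p. beta t p + real (q p)) \<in> MM (h t + sum q UNIV)"
  using latt_beta[of t q] beta_ge[of t] sum_beta[of t] by (simp add: MM_def sum.distrib)

lemma MM_nat: "(\<lambda>p. real (q p)) \<in> MM (sum q UNIV)"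
  using MM_beta[of 0 q] j2 by (simp add: beta0 h_def)

lemma NATV: "sum q UNIV = m * n \<Longrightarrow> (\<lambda>p. real (q p)) \<in> ksum m (MM n)"
proof (induction m arbitrary: q)
  case 0
  then have "\<forall>p. q p = 0" by simp
  then show ?case by (simp add: zero_fun_def)
next
  case (Suc m)
  obtain q1 where q1: "\<forall>p. q1 p \<le> q p" "sum q1 UNIV = n" using SPLIT[of n q] Suc.prems by auto
  define q2 where "q2 p = q p - q1 p" for p
  have qq: "q = (\<lambda>p. q1 p + q2 p)" using q1(1) by (auto simp: q2_def)
  then have "sum q UNIV = sum q1 UNIV + sum q2 UNIV" by (simp add: sum.distrib)
  then have "sum q2 UNIV = m * n" using Suc.prems q1(2) by simp
  then have "(\<lambda>p. real (q2 p)) \<in> ksum m (MM n)" by (rule Suc.IH)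
  moreover have "(\<lambda>p. real (q1 p)) \<in> MM n" using MM_nat[of q1] q1(2) by simp
  moreover have "(\<lambda>p. real (q p)) = (\<lambda>p. real (q1 p)) + (\<lambda>p. real (q2 p))" by (subst qq) (simp add: fun_eq_iff)
  ultimately show ?case by auto
qed

lemma IDP_core: assumes "j \<le> n" "1 \<le> K" shows "MM (K * n) \<subseteq> ksum K (MM n)"
proof
  fix \<mu> assume m: "\<mu> \<in> MM (K * n)"
  obtain t q where tq: "t < j" "\<mu> = (\<lambda>p. beta t p + real (q p))" using DEC m MM_def by blast
  have "real (K * n) = real (h t) + real (sum q UNIV)" using m tq sum_beta[OF tq(1)] by (simp add: MM_def sum.distrib)
  then have sq: "K * n = h t + sum q UNIV" by (metis of_nat_add of_nat_eq_iff)
  have ht: "h t \<le> n" using h_le[OF tq(1)] assms(1) by simp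
  have "n \<le> K * n" using assms(2) by simp
  then have "n - h t \<le> sum q UNIV" using sq by linarith
  then obtain q1 where q1: "\<forall>p. q1 p \<le> q p" "sum q1 UNIV = n - h t" using SPLIT by blast
  define q2 where "q2 p = q p - q1 p" for p
  have qq: "q = (\<lambda>p. q1 p + q2 p)" using q1(1) by (auto simp: q2_def)
  then have "sum q UNIV = sum q1 UNIV + sum q2 UNIV" by (simp add: sum.distrib)
  then have "sum q2 UNIV = (K - 1) * n" using sq q1(2) ht assms(2)
    by (simp add: diff_mult_distrib)
  then have A: "(\<lambda>p. real (q2 p)) \<in> ksum (K - 1) (MM n)" by (rule NATV)
  have B: "(\<lambda>p. beta t p + real (q1 p)) \<in> MM n" using MM_beta[OF tq(1), of q1] q1(2) ht by simp
  have "\<mu> = (\<lambda>p. beta t p + real (q1 p)) + (\<lambda>p. real (q2 p))" using tq(2) by (subst (asm) qq) (simp add: fun_eq_iff)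
  then have "\<mu> \<in> ksum (Suc (K - 1)) (MM n)" using A B by auto
  then show "\<mu> \<in> ksum K (MM n)" using assms(2) by simp
qed

lemma IDP_PP: "j \<le> n \<Longrightarrow> IDP (dil n PP)"
  unfolding IDP_def using IDP_core decomp_of by blast

lemma INV: assumes "k < j" "y \<in> ksum m (MM k)"
  shows "(\<forall>p. 0 \<le> y p) \<and> (y None \<in> \<int> \<or> y None \<ge> 2 / real j)"
  using assms(2)
proof (induction m arbitrary: y)
  case 0 then show ?case by simp
next
  case (Suc m)
  then obtain x z where xz: "y = x + z" "x \<in> MM k" "z \<in> ksum m (MM k)" by auto
  obtain t q where tq: "t < j" "x = (\<lambda>p. beta t p + real (q p))" using DEC xz(2) MM_def by blast
  have "real k = real (h t) + real (sum q UNIV)" using xz(2) tq sum_beta[OF tq(1)] by (simp add: MM_def sum.distrib)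
  then have "h t \<le> k" by linarith
  then have xN: "x None \<in> \<int> \<or> x None \<ge> 2 / real j"
  proof (cases "t = 0")
    case True then show ?thesis using tq by (simp add: beta_def)
  next
    case False
    then have "t + 2 \<le> j" using \<open>h t \<le> k\<close> assms(1) by (simp add: h_def)
    then have "(real j - real t) / real j \<ge> 2 / real j" using jpos by (simp add: divide_right_mono)
    then show ?thesis using tq False by (simp add: beta_def)
  qed
  have x0: "\<forall>p. 0 \<le> x p" using xz(2) by (simp add: MM_def)
  have IH: "(\<forall>p. 0 \<le> z p) \<and> (z None \<in> \<int> \<or> z None \<ge> 2 / real j)" using Suc.IH xz(3) by blast
  have "y None = x None + z None" using xz(1) by simp
  then have "y None \<in> \<int> \<or> y None \<ge> 2 / real j"
  proof -
    assume yN: "y None = x None + z None"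
    show ?thesis
    proof (cases "x None \<in> \<int> \<and> z None \<in> \<int>")
      case True then show ?thesis using yN by (simp add: Ints_add)
    next
      case False
      then have "x None \<ge> 2 / real j \<or> z None \<ge> 2 / real j" using xN IH by blast
      then show ?thesis using yN x0 IH by (metis add.commute add_increasing le_add_same_cancel1 order_trans)
    qed
  qed
  moreover have "\<forall>p. 0 \<le> y p" using xz(1) x0 IH by (simp add: add_nonneg_nonneg)
  ultimately show ?case by blast
qed

lemma not_va: assumes "1 \<le> k" "k < j" shows "\<not> very_ample (dil k PP)"
proof
  assume "very_ample (dil k PP)"
  then obtain k0 where k0: "\<forall>K\<ge>k0. K \<ge> 1 \<longrightarrow> decomp_at K (dil k PP)" unfolding very_ample_def by blast
  define K where "K = max k0 j"
  have K1: "K \<ge> 1" "K \<ge> k0" using j2 by (auto simp: K_def)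
  have "K \<le> K * k" using assms(1) by simp
  moreover have "j \<le> K" by (simp add: K_def)
  ultimately have Kk: "j \<le> K * k" by linarith
  define q where "q p = (if p = Some a then K * k - j else 0)" for p
  define \<mu> where "\<mu> p = beta (j - 1) p + real (q p)" for p
  have tj: "j - 1 < j" using j2 by simp
  have "sum q UNIV = K * k - j" by (simp add: q_def)
  moreover have "h (j - 1) = j" using j2 by (simp add: h_def)
  ultimately have "\<mu> \<in> MM (K * k)" using MM_beta[OF tj, of q] Kk unfolding \<mu>_def by simp
  moreover have "\<mu> \<notin> ksum K (MM k)"
  proof
    assume "\<mu> \<in> ksum K (MM k)"
    then have "\<mu> None \<in> \<int> \<or> \<mu> None \<ge> 2 / real j" using INV assms(2) by blast
    moreover have "\<mu> None = 1 / real j" using beta_top_None by (simp add: \<mu>_def q_def)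
    moreover have "0 < 1 / real j" "1 / real j < 1" using j2 by auto
    moreover have "1 / real j < 2 / real j" using jpos by (simp add: divide_strict_right_mono)
    ultimately show False using not_Int_frac by auto
  qed
  ultimately have "\<not> decomp_at K (dil k PP)" by (rule not_decomp_of)
  then show False using k0 K1 by blast
qed

lemma IDP_va: "IDP Q \<Longrightarrow> very_ample Q"
  unfolding IDP_def very_ample_def by blast

lemma not_IDP: "1 \<le> k \<Longrightarrow> k < j \<Longrightarrow> \<not> IDP (dil k PP)"
  using not_va IDP_va by blast

lemma mu_va_PP: "mu_va PP = j"
  unfolding mu_va_def
proof (rule Least_equality)
  show "0 < j \<and> very_ample (dil j PP)" using j2 IDP_PP IDP_va by auto
  fix y assume y: "0 < y \<and> very_ample (dil y PP)"
  show "j \<le> y"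
  proof (rule ccontr)
    assume "\<not> j \<le> y" then show False using not_va[of y] y by simp
  qed
qed

lemma mu_midp_PP: "mu_midp PP = j"
  unfolding mu_midp_def
proof (rule Least_equality)
  show "0 < j \<and> IDP (dil j PP)" using j2 IDP_PP by auto
  fix y assume y: "0 < y \<and> IDP (dil y PP)"
  show "j \<le> y"
  proof (rule ccontr)
    assume "\<not> j \<le> y" then show False using not_IDP[of y] y by simp
  qed
qed

lemma mu_idp_PP: "mu_idp PP = j"
  unfolding mu_idp_def
proof (rule Least_equality)
  show "0 < j \<and> (\<forall>n\<ge>j. IDP (dil n PP))" using j2 IDP_PP by auto
  fix y assume y: "0 < y \<and> (\<forall>n\<ge>y. IDP (dil n PP))"
  show "j \<le> y"
  proof (rule ccontr)
    assume "\<not> j \<le> y" then show False using not_IDP[of y] y by simp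
  qed
qed

lemma card_q: "card {q :: 'n option \<Rightarrow> nat. sum q UNIV = r} = (r + CARD('n)) choose r"
proof -
  obtain xs :: "'n option list" where xs: "set xs = UNIV" "distinct xs"
    using finite_distinct_list[of "UNIV :: 'n option set"] by auto
  have lxs: "length xs = CARD('n) + 1"
    using distinct_card[OF xs(2)] xs(1) by (simp add: card_UNIV_option)
  define idx where "idx x = (THE i. i < length xs \<and> xs ! i = x)" for x
  have idx: "idx (xs ! i) = i" if "i < length xs" for i
    unfolding idx_def using that xs(2) by (intro the_equality) (auto simp: nth_eq_iff_index_eq)
  let ?f = "\<lambda>q :: 'n option \<Rightarrow> nat. map q xs"
  have inj: "inj_on ?f {q. sum q UNIV = r}"
  proof
    fix q q' assume "map q xs = map q' xs"
    then have "\<forall>x\<in>set xs. q x = q' x" by (simp add: map_eq_conv)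
    then show "q = q'" using xs(1) by auto
  qed
  have img: "?f ` {q. sum q UNIV = r} = {l. length l = CARD('n) + 1 \<and> sum_list l = r}"
  proof (intro set_eqI iffI)
    fix l assume "l \<in> ?f ` {q. sum q UNIV = r}"
    then obtain q where "sum q UNIV = r" "l = map q xs" by blast
    then show "l \<in> {l. length l = CARD('n) + 1 \<and> sum_list l = r}"
      using lxs sum.distinct_set_conv_list[OF xs(2), of q] xs(1) by simp
  next
    fix l assume l: "l \<in> {l. length l = CARD('n) + 1 \<and> sum_list l = r}"
    define q where "q x = l ! idx x" for x
    have "map q xs = l"
      by (rule nth_equalityI) (use l lxs in \<open>auto simp: q_def idx\<close>)
    moreover have "sum q UNIV = r"
      using sum.distinct_set_conv_list[OF xs(2), of q] xs(1) \<open>map q xs = l\<close> l by simp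
    ultimately show "l \<in> ?f ` {q. sum q UNIV = r}" by blast
  qed
  have "card {q :: 'n option \<Rightarrow> nat. sum q UNIV = r} = card (?f ` {q. sum q UNIV = r})"
    using card_image[OF inj] by simp
  also have "\<dots> = (r + (CARD('n) + 1) - 1) choose r" unfolding img by (rule card_length_sum_list)
  finally show ?thesis by simp
qed

lemma finite_q: "finite {q :: 'n option \<Rightarrow> nat. sum q UNIV = r}"
  by (rule card_ge_0_finite) (simp add: card_q)

definition TT :: "nat \<Rightarrow> nat set" where "TT n = {t \<in> {..<j}. h t \<le> n}"

lemma MM_image: "MM n = (\<lambda>(t, q). (\<lambda>p. beta t p + real (q p))) ` (SIGMA t:TT n. {q. sum q UNIV = n - h t})"
proof (intro set_eqI iffI)
  fix \<mu> assume m: "\<mu> \<in> MM n"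
  obtain t q where tq: "t < j" "\<mu> = (\<lambda>p. beta t p + real (q p))" using DEC m MM_def by blast
  have "real n = real (h t) + real (sum q UNIV)" using m tq sum_beta[OF tq(1)] by (simp add: MM_def sum.distrib)
  then have "n = h t + sum q UNIV" by (metis of_nat_add of_nat_eq_iff)
  then have "t \<in> TT n" "sum q UNIV = n - h t" using tq(1) by (auto simp: TT_def)
  then show "\<mu> \<in> (\<lambda>(t, q). (\<lambda>p. beta t p + real (q p))) ` (SIGMA t:TT n. {q. sum q UNIV = n - h t})"
    using tq(2) by force
next
  fix \<mu> assume "\<mu> \<in> (\<lambda>(t, q). (\<lambda>p. beta t p + real (q p))) ` (SIGMA t:TT n. {q. sum q UNIV = n - h t})"
  then obtain t q where tq: "t \<in> TT n" "sum q UNIV = n - h t" "\<mu> = (\<lambda>p. beta t p + real (q p))" by auto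
  then have "t < j" "h t \<le> n" by (auto simp: TT_def)
  then show "\<mu> \<in> MM n" using MM_beta[of t q] tq by simp
qed

lemma card_MM: "card (MM n) = (\<Sum>t<j. if h t \<le> n then (n - h t + CARD('n)) choose (n - h t) else 0)"
proof -
  have inj: "inj_on (\<lambda>(t, q). (\<lambda>p. beta t p + real (q p))) (SIGMA t:TT n. {q. sum q UNIV = n - h t})"
  proof (rule inj_onI, clarify)
    fix t q t' q'
    assume "t \<in> TT n" "t' \<in> TT n" "(\<lambda>p. beta t p + real (q p)) = (\<lambda>p. beta t' p + real (q' p))"
    then show "t = t' \<and> q = q'" using DEC_uniq by (auto simp: TT_def)
  qed
  have "card (MM n) = card (SIGMA t:TT n. {q :: 'n option \<Rightarrow> nat. sum q UNIV = n - h t})"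
    unfolding MM_image using card_image[OF inj] by simp
  also have "\<dots> = (\<Sum>t\<in>TT n. card {q :: 'n option \<Rightarrow> nat. sum q UNIV = n - h t})"
    by (rule card_SigmaI) (auto simp: TT_def finite_q)
  also have "\<dots> = (\<Sum>t\<in>TT n. (n - h t + CARD('n)) choose (n - h t))" by (simp add: card_q)
  also have "\<dots> = (\<Sum>t<j. if h t \<le> n then (n - h t + CARD('n)) choose (n - h t) else 0)"
    unfolding TT_def by (rule sum.inter_filter) simp
  finally show ?thesis .
qed

lemma card_latt_dil: "card (lattice_pts (dil n PP)) = card (MM n)"
proof -
  have "inj_on Phi (MM n)" by (rule inj_onI) (use Phi_inj in \<open>auto simp: MM_def\<close>)
  then show ?thesis by (simp add: latt_pts_dil card_image)
qed

end

definition GF :: "nat \<Rightarrow> int fps" where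
  "GF D = Abs_fps (\<lambda>n. of_nat ((n + D - 1) choose n))"

lemma mult_one_minus_X_nth: "fps_nth (f * (1 - fps_X)) n = fps_nth f n - (if n = 0 then 0 else fps_nth f (n - 1))"
  for f :: "int fps"
  by (simp add: right_diff_distrib fps_mult_fps_X_commute[symmetric])

lemma GF_step: "GF (Suc D) * (1 - fps_X) = GF D"
proof (rule fps_ext)
  fix n show "fps_nth (GF (Suc D) * (1 - fps_X)) n = fps_nth (GF D) n"
  proof (cases n)
    case 0 then show ?thesis by (simp add: mult_one_minus_X_nth GF_def)
  next
    case (Suc m)
    have "(Suc m + D) choose (Suc m) = ((m + D) choose m) + ((m + D) choose (Suc m))"
      by (metis add_Suc binomial_Suc_Suc)
    then show ?thesis using Suc by (simp add: mult_one_minus_X_nth GF_def)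
  qed
qed

lemma GF0: "GF 0 = 1"
proof (rule fps_ext)
  fix n show "fps_nth (GF 0) n = fps_nth 1 n"
    by (cases n) (auto simp: GF_def)
qed

lemma GF_inv: "GF D * (1 - fps_X) ^ D = 1"
proof (induction D)
  case 0 then show ?case by (simp add: GF0)
next
  case (Suc D)
  have "GF (Suc D) * (1 - fps_X) ^ Suc D = (GF (Suc D) * (1 - fps_X)) * (1 - fps_X) ^ D"
    by (simp add: algebra_simps)
  then show ?case using Suc by (simp add: GF_step)
qed

context cs begin

lemma ehr_PP: "ehrhart_series PP = (\<Sum>t<j. fps_X ^ h t) * GF (CARD('n) + 1)"
proof (rule fps_ext)
  fix n
  have "fps_nth (ehrhart_series PP) n = int (\<Sum>t<j. if h t \<le> n then (n - h t + CARD('n)) choose (n - h t) else 0)"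
    by (simp add: ehrhart_series_def card_latt_dil card_MM)
  also have "\<dots> = (\<Sum>t<j. fps_nth (fps_X ^ h t * GF (CARD('n) + 1)) n)"
    unfolding of_nat_sum by (rule sum.cong) (auto simp: fps_X_power_mult_nth GF_def)
  also have "\<dots> = fps_nth ((\<Sum>t<j. fps_X ^ h t) * GF (CARD('n) + 1)) n"
    by (simp add: sum_distrib_right fps_sum_nth)
  finally show "fps_nth (ehrhart_series PP) n = fps_nth ((\<Sum>t<j. fps_X ^ h t) * GF (CARD('n) + 1)) n" .
qed

lemma delta_PP: "delta PP i = (\<Sum>t<j. if i = h t then 1 else 0)"
proof -
  have "nat (aff_dim PP) + 1 = CARD('n) + 1" by (simp add: aff_dim_PP)
  then have "delta PP i = fps_nth ((\<Sum>t<j. fps_X ^ h t) * (GF (CARD('n) + 1) * (1 - fps_X) ^ (CARD('n) + 1))) i"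
    unfolding delta_def ehr_PP by (simp add: mult.assoc)
  also have "\<dots> = (\<Sum>t<j. if i = h t then 1 else 0)" by (simp only: GF_inv mult_1_right) (simp add: fps_sum_nth)
  finally show ?thesis .
qed

lemma mu_Ehr_PP: "mu_Ehr PP = j"
  unfolding mu_Ehr_def
proof (rule Greatest_equality)
  have tj: "j - 1 \<in> {..<j}" using j2 by simp
  have "(1::int) \<le> (\<Sum>t<j. if j = h t then 1 else 0)"
  proof -
    have "(if j = h (j - 1) then 1 else 0) \<le> (\<Sum>t<j. if j = h t then (1::int) else 0)"
      by (rule member_le_sum[OF tj]) auto
    moreover have "h (j - 1) = j" using j2 by (simp add: h_def)
    ultimately show ?thesis by simp
  qed
  then show "0 < j \<and> delta PP j \<noteq> 0" using j2 by (simp add: delta_PP)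
next
  fix y assume y: "0 < y \<and> delta PP y \<noteq> 0"
  then have "(\<Sum>t<j. if y = h t then 1 else 0) \<noteq> (0::int)" by (simp add: delta_PP)
  then obtain t where "t < j" "y = h t" by (metis (mono_tags, lifting) lessThan_iff sum.neutral)
  then show "y \<le> j" using h_le by simp
qed

end

theorem theorem2p1:
  fixes d j :: nat
  assumes "CARD('n::finite) = d" and "3 \<le> d" and "2 \<le> j" and "j \<le> d - 1"
  shows "\<exists>P :: (real^'n) set. empty_simplex (int d) P \<and>
           mu_va P = j \<and> mu_midp P = j \<and> mu_idp P = j \<and>
           mu_Hilb P = j \<and> mu_hole P = j \<and> mu_Ehr P = j"
proof -
  define a :: 'n where "a = undefined"
  have "card (UNIV - {a}) = d - 1" using assms(1) by (simp add: card_Diff_singleton)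
  then have "j \<le> card (UNIV - {a})" using assms(4) by simp
  then obtain J where J: "J \<subseteq> UNIV - {a}" "card J = j"
    using obtain_subset_with_card_n by metis
  interpret cs a J j
    by unfold_locales (use J assms(3) in auto)
  show ?thesis
    using empty_simplex_PP mu_va_PP mu_midp_PP mu_idp_PP mu_Hilb_PP mu_hole_PP mu_Ehr_PP assms(1)
    by blast
qed

end
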